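(* Let $\mathcal{H}$ be a real Hilbert space, let $A,B:\mathcal{H}\rightrightarrows\mathcal{H}$ be maximally monotone operators, let $\gamma>0$, and let $(\lambda_n)_{n=0}^\infty$ be a sequence in $[0,1]$ such that $\sum_{n\geq 0}\lambda_n(1-\lambda_n)=+\infty$. Let $\beta\in{]0,1[}$ and suppose that $q\in\operatorname{ran}\left(\operatorname{Id}+\frac{\gamma}{2(1-\beta)}(A+B)\right)$. Given any $x_0\in\mathcal{H}$, define for $n=0,1,2,\ldots$ \[ x_{n+1}=(1-\lambda_n)x_n+\lambda_n\left(2\beta J_{(\gamma B_{-q})}-\operatorname{Id}\right)\left(2\beta J_{(\gamma A_{-q})}-\operatorname{Id}\right)(x_n). \] Then there exists $x^\star\in\operatorname{Fix}\left((2\beta J_{(\gamma B_{-q})}-\operatorname{Id})(2\beta J_{(\gamma A_{-q})}-\operatorname{Id})\right)$ such that: (i) $(x_{n+1}-x_n)_{n=0}^\infty$ converges strongly to $0$; (ii) $(x_n)_{n=0}^\infty$ converges weakly to $x^\star$, and $J_{\gamma A}(q+x^\star)=J_{\frac{\gamma}{2(1-\beta)}(A+B)}(q)$; (iii) $\left(J_{\gamma A}(q+x_n)\right)_{n=0}^\infty$ converges strongly to $J_{\frac{\gamma}{2(1-\beta)}(A+B)}(q)$.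
   Context: For an operator $T:\mathcal{H}\rightrightarrows\mathcal{H}$, the resolvent is $J_T:=(\operatorname{Id}+T)^{-1}$, i.e. $J_T(x)=\{y: x\in y+T(y)\}$; for maximally monotone $T$ it is single-valued with full domain. For $w\in\mathcal{H}$, the inner $w$-perturbation of $T$ is $T_w(x):=T(x-w)$; thus $\gamma A_{-q}$ denotes the operator $x\mapsto\gamma A(x+q)$. $\operatorname{Fix}S=\{x: x=S(x)\}$ and $\operatorname{ran}$ denotes the range. *)

theory Defs
  imports "HOL-Analysis.Analysis"
begin

text \<open>Set-valued operators on a real inner product space are modelled as functions
  into sets. Real Hilbert space = class real_inner + complete_space.\<close>

definition mono_op :: "('a::real_inner \<Rightarrow> 'a set) \<Rightarrow> bool" where
  "mono_op T \<longleftrightarrow> (\<forall>x y u v. u \<in> T x \<longrightarrow> v \<in> T y \<longrightarrow> inner (x - y) (u - v) \<ge> 0)"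

definition max_mono_op :: "('a::real_inner \<Rightarrow> 'a set) \<Rightarrow> bool" where
  "max_mono_op T \<longleftrightarrow> mono_op T \<and>
     (\<forall>S. mono_op S \<and> (\<forall>x. T x \<subseteq> S x) \<longrightarrow> S = T)"

definition op_add :: "('a::real_vector \<Rightarrow> 'a set) \<Rightarrow> ('a \<Rightarrow> 'a set) \<Rightarrow> ('a \<Rightarrow> 'a set)" where
  "op_add A B = (\<lambda>x. {a + b | a b. a \<in> A x \<and> b \<in> B x})"

definition op_scale :: "real \<Rightarrow> ('a::real_vector \<Rightarrow> 'a set) \<Rightarrow> ('a \<Rightarrow> 'a set)" where
  "op_scale c T = (\<lambda>x. (\<lambda>v. c *\<^sub>R v) ` T x)"

definition op_perturb :: "('a::real_vector \<Rightarrow> 'a set) \<Rightarrow> 'a \<Rightarrow> ('a \<Rightarrow> 'a set)" where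
  "op_perturb T w = (\<lambda>x. T (x - w))"

definition ran_id_plus :: "('a::real_vector \<Rightarrow> 'a set) \<Rightarrow> 'a set" where
  "ran_id_plus T = {x + v | x v. v \<in> T x}"

text \<open>Resolvent J_T(x) = (Id+T)^{-1}(x), as a point (the unique y with x \<in> y + T y,
  which exists and is unique in all uses below).\<close>
definition resolvent :: "('a::real_vector \<Rightarrow> 'a set) \<Rightarrow> 'a \<Rightarrow> 'a" where
  "resolvent T x = (THE y. x - y \<in> T y)"

definition weak_conv :: "(nat \<Rightarrow> 'a::real_inner) \<Rightarrow> 'a \<Rightarrow> bool" where
  "weak_conv x l \<longleftrightarrow> (\<forall>y. (\<lambda>n. inner (x n) y) \<longlonglongrightarrow> inner l y)"

end

theory Submission
  imports Defs
begin
lemma max_mono_mono: "max_mono_op A \<Longrightarrow> mono_op A"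
  by (simp add: max_mono_op_def)

lemma max_mono_extend:
  assumes "max_mono_op A"
    and "\<And>y v. v \<in> A y \<Longrightarrow> inner (x - y) (u - v) \<ge> 0"
  shows "u \<in> A x"
proof -
  define S where "S = (\<lambda>z. A z \<union> (if z = x then {u} else {}))"
  have mA: "mono_op A" using assms(1) by (simp add: max_mono_op_def)
  have "mono_op S"
    unfolding mono_op_def
  proof (intro allI impI)
    fix a b c d assume c: "c \<in> S a" and d: "d \<in> S b"
    show "inner (a - b) (c - d) \<ge> 0"
    proof (cases "c \<in> A a")
      case True
      show ?thesis
      proof (cases "d \<in> A b")
        case True
        then show ?thesis using \<open>c \<in> A a\<close> mA unfolding mono_op_def by blast
      next
        case False
        then have "b = x" "d = u" using d by (auto simp: S_def split: if_splits)
        then have "inner (x - a) (u - c) \<ge> 0" using assms(2) \<open>c \<in> A a\<close> by blast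
        moreover have "inner (a - b) (c - d) = inner (x - a) (u - c)"
          using \<open>b = x\<close> \<open>d = u\<close> by (simp add: inner_diff_left inner_diff_right)
        ultimately show ?thesis by simp
      qed
    next
      case False
      then have "a = x" "c = u" using c by (auto simp: S_def split: if_splits)
      show ?thesis
      proof (cases "d \<in> A b")
        case True
        then show ?thesis using assms(2) \<open>a = x\<close> \<open>c = u\<close> by blast
      next
        case False
        then have "b = x" "d = u" using d by (auto simp: S_def split: if_splits)
        then show ?thesis using \<open>a = x\<close> \<open>c = u\<close> by simp
      qed
    qed
  qed
  moreover have "\<forall>z. A z \<subseteq> S z" by (auto simp: S_def)
  ultimately have "S = A" using assms(1) unfolding max_mono_op_def by blast
  then show ?thesis by (metis S_def UnCI singletonI)
qed

lemma max_mono_nonempty: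
  assumes "max_mono_op A" shows "\<exists>y v. v \<in> A y"
proof (rule ccontr)
  assume H: "\<not> ?thesis"
  then have "\<And>y v. v \<in> A y \<Longrightarrow> inner (0 - y) (0 - v) \<ge> 0" by blast
  then have "0 \<in> A 0" using max_mono_extend[OF assms] by blast
  then show False using H by blast
qed

definition Lf :: "'a::real_inner \<Rightarrow> 'a \<Rightarrow> 'a \<Rightarrow> 'a \<Rightarrow> real" where
  "Lf y v x u = inner x v + inner y u - inner y v"

lemma mid_norm: "(norm ((1 - t) *\<^sub>R a + t *\<^sub>R b))\<^sup>2
   = (1 - t) * (norm a)\<^sup>2 + t * (norm b)\<^sup>2 - t * (1 - t) * (norm (a - b))\<^sup>2"
  for a b :: "'a::real_inner"
  unfolding power2_norm_eq_inner
  by (simp add: inner_diff_left inner_diff_right inner_add_left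
      inner_add_right inner_commute algebra_simps)

lemma small_t_lemma:
  fixes a b :: real
  assumes "\<And>t. 0 < t \<Longrightarrow> t \<le> 1 \<Longrightarrow> 0 \<le> a + t * b"
  shows "0 \<le> a"
proof (rule ccontr)
  assume "\<not> 0 \<le> a"
  then have a: "a < 0" by simp
  have "0 \<le> a + b" using assms[of 1] by simp
  then have b: "b > 0" using a by simp
  define t where "t = min 1 (-a / (2*b))"
  have t0: "0 < t" using a b by (simp add: t_def divide_neg_pos)
  have t1: "t \<le> 1" by (simp add: t_def)
  have "t * b \<le> (-a/(2*b)) * b" unfolding t_def using b by (intro mult_right_mono) auto
  also have "\<dots> = -a/2" using b by simp
  finally have "a + t*b < 0" using a by simp
  then show False using assms[OF t0 t1] by simp
qed

lemma Lf_affine: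
  "Lf y v ((1 - t) *\<^sub>R x1 + t *\<^sub>R x2) ((1 - t) *\<^sub>R u1 + t *\<^sub>R u2)
     = (1 - t) * Lf y v x1 u1 + t * Lf y v x2 u2"
  by (simp add: Lf_def inner_add_left inner_add_right algebra_simps)

lemma minty_core:
  fixes A :: "'a::{real_inner, complete_space} \<Rightarrow> 'a set"
  assumes mm: "max_mono_op A"
  shows "\<exists>z. - z \<in> A z"
proof -
  define inS where "inS x u r \<longleftrightarrow> (\<forall>y v. v \<in> A y \<longrightarrow> Lf y v x u \<le> r)" for x u r
  define Q where "Q x u r = r + (norm x)\<^sup>2 / 2 + (norm u)\<^sup>2 / 2" for x u :: 'a and r :: real
  define Qs where "Qs = {Q x u r | x u r. inS x u r}"
  define m where "m = Inf Qs"
  have F1: "inner x u \<le> r" if "inS x u r" for x u r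
  proof (rule ccontr)
    assume "\<not> inner x u \<le> r"
    then have lt: "r < inner x u" by simp
    have "inner (x - y) (u - v) \<ge> 0" if "v \<in> A y" for y v
    proof -
      have "Lf y v x u \<le> r" using \<open>inS x u r\<close> that by (simp add: inS_def)
      moreover have "inner (x - y) (u - v) = inner x u - Lf y v x u"
        by (simp add: Lf_def inner_diff_left inner_diff_right inner_commute)
      ultimately show ?thesis using lt by simp
    qed
    then have "u \<in> A x" using max_mono_extend[OF mm] by blast
    then have "Lf x u x u \<le> r" using \<open>inS x u r\<close> by (simp add: inS_def)
    then show False using lt by (simp add: Lf_def)
  qed
  have F2: "0 \<le> Q x u r" if "inS x u r" for x u r
  proof -
    have "0 \<le> (norm (x + u))\<^sup>2" by simp
    also have "(norm (x + u))\<^sup>2 = (norm x)\<^sup>2 + 2 * inner x u + (norm u)\<^sup>2"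
      unfolding power2_norm_eq_inner by (simp add: inner_add_left inner_add_right inner_commute)
    finally show ?thesis using F1[OF that] by (simp add: Q_def)
  qed
  have F3: "inS y v (inner y v)" if "v \<in> A y" for y v
    unfolding inS_def
  proof (intro allI impI)
    fix y' v' assume "v' \<in> A y'"
    then have "inner (y - y') (v - v') \<ge> 0" using that max_mono_mono[OF mm] unfolding mono_op_def by blast
    then show "Lf y' v' y v \<le> inner y v"
      by (simp add: Lf_def inner_diff_left inner_diff_right inner_commute)
  qed
  have F4: "inS ((1 - t) *\<^sub>R x1 + t *\<^sub>R x2) ((1 - t) *\<^sub>R u1 + t *\<^sub>R u2) ((1 - t) * r1 + t * r2)"
    if "inS x1 u1 r1" "inS x2 u2 r2" "0 \<le> t" "t \<le> 1" for x1 u1 r1 x2 u2 r2 t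
    unfolding inS_def
  proof (intro allI impI)
    fix y v assume yv: "v \<in> A y"
    have "Lf y v x1 u1 \<le> r1" "Lf y v x2 u2 \<le> r2" using that(1,2) yv by (auto simp: inS_def)
    then have "(1 - t) * Lf y v x1 u1 + t * Lf y v x2 u2 \<le> (1 - t) * r1 + t * r2"
      using that(3,4) by (intro add_mono mult_left_mono) auto
    then show "Lf y v ((1 - t) *\<^sub>R x1 + t *\<^sub>R x2) ((1 - t) *\<^sub>R u1 + t *\<^sub>R u2) \<le> (1 - t) * r1 + t * r2"
      by (simp add: Lf_affine)
  qed
  obtain y0 v0 where y0: "v0 \<in> A y0" using max_mono_nonempty[OF mm] by blast
  have Qne: "Qs \<noteq> {}" using F3[OF y0] by (auto simp: Qs_def)
  have Qbdd: "bdd_below Qs" unfolding Qs_def bdd_below_def using F2 by blast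
  have Qlow: "m \<le> Q x u r" if "inS x u r" for x u r
    unfolding m_def by (rule cInf_lower) (use that Qbdd in \<open>auto simp: Qs_def\<close>)
  have "\<exists>x u r. inS x u r \<and> Q x u r < m + 1 / (real k + 1)" for k
  proof -
    have "Inf Qs < m + 1 / (real k + 1)" by (simp add: m_def)
    from cInf_lessD[OF Qne this] show ?thesis by (auto simp: Qs_def)
  qed
  then obtain X U R where XUR: "\<And>k. inS (X k) (U k) (R k)"
     "\<And>k. Q (X k) (U k) (R k) < m + 1 / (real k + 1)" by metis
  define Qk where "Qk k = Q (X k) (U k) (R k)" for k
  have mid: "(norm (X k - X j))\<^sup>2 + (norm (U k - U j))\<^sup>2 \<le> 4 * (1 / (real k + 1) + 1 / (real j + 1))" for k j
  proof -
    have "inS ((1 - 1/2) *\<^sub>R X k + (1/2) *\<^sub>R X j) ((1 - 1/2) *\<^sub>R U k + (1/2) *\<^sub>R U j)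
        ((1 - 1/2) * R k + (1/2) * R j)"
      by (rule F4[OF XUR(1) XUR(1)]) auto
    then have "m \<le> Q ((1 - 1/2) *\<^sub>R X k + (1/2) *\<^sub>R X j) ((1 - 1/2) *\<^sub>R U k + (1/2) *\<^sub>R U j)
        ((1 - 1/2) * R k + (1/2) * R j)" by (rule Qlow)
    also have "\<dots> = Qk k / 2 + Qk j / 2 - ((norm (X k - X j))\<^sup>2 + (norm (U k - U j))\<^sup>2) / 8"
      unfolding Q_def Qk_def mid_norm by simp (simp add: field_simps)
    finally have H: "m \<le> Qk k / 2 + Qk j / 2 - ((norm (X k - X j))\<^sup>2 + (norm (U k - U j))\<^sup>2) / 8" .
    have H1: "Qk k < m + 1 / (real k + 1)" "Qk j < m + 1 / (real j + 1)" using XUR(2) unfolding Qk_def by auto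
    define ik where "ik = 1 / (real k + 1)"
    define ij where "ij = 1 / (real j + 1)"
    from H H1 show ?thesis unfolding ik_def[symmetric] ij_def[symmetric] by (simp add: field_simps)
  qed
  have cauchy_gen: "Cauchy W" if W: "\<And>k j. (norm (W k - W j))\<^sup>2 \<le> 4 * (1 / (real k + 1) + 1 / (real j + 1))"
    for W :: "nat \<Rightarrow> 'a"
  proof (rule metric_CauchyI)
    fix e :: real assume e: "e > 0"
    obtain N :: nat where N: "8 / e\<^sup>2 < real N" using reals_Archimedean2 by blast
    have "\<forall>k\<ge>N. \<forall>j\<ge>N. dist (W k) (W j) < e"
    proof (intro allI impI)
      fix k j assume k: "k \<ge> N" and j: "j \<ge> N"
      have Np: "real N > 0" using N e by (smt (verit) divide_pos_pos zero_less_power)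
      have "1 / (real k + 1) \<le> 1 / real N" using k Np by (simp add: frac_le)
      moreover have "1 / (real j + 1) \<le> 1 / real N" using j Np by (simp add: frac_le)
      ultimately have "(norm (W k - W j))\<^sup>2 \<le> 8 / real N" using W[of k j] by simp
      also have "8 / real N < e\<^sup>2" using N e Np by (simp add: field_simps)
      finally have "(norm (W k - W j))\<^sup>2 < e\<^sup>2" .
      then have "norm (W k - W j) < e" using e by (simp add: power_less_imp_less_base)
      then show "dist (W k) (W j) < e" by (simp add: dist_norm)
    qed
    then show "\<exists>M. \<forall>k\<ge>M. \<forall>j\<ge>M. dist (W k) (W j) < e" by blast
  qed
  have "Cauchy X" by (rule cauchy_gen) (use mid in \<open>smt (verit) zero_le_power2\<close>)
  then obtain xb where xb: "X \<longlonglongrightarrow> xb" using Cauchy_convergent convergent_def by blast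
  have "Cauchy U" by (rule cauchy_gen) (use mid in \<open>smt (verit) zero_le_power2\<close>)
  then obtain ub where ub: "U \<longlonglongrightarrow> ub" using Cauchy_convergent convergent_def by blast
  have Qk_lim: "Qk \<longlonglongrightarrow> m"
  proof (rule tendsto_sandwich[of "\<lambda>k. m" _ _ "\<lambda>k. m + 1 / (real k + 1)"])
    show "\<forall>\<^sub>F k in sequentially. m \<le> Qk k" using Qlow XUR(1) by (simp add: Qk_def)
    show "\<forall>\<^sub>F k in sequentially. Qk k \<le> m + 1 / (real k + 1)" using XUR(2) by (simp add: Qk_def less_imp_le)
    show "(\<lambda>k. m) \<longlonglongrightarrow> m" by simp
    have "(\<lambda>k. 1 / (real k + 1)) \<longlonglongrightarrow> 0" using LIMSEQ_inverse_real_of_nat_add[of 0]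
      by (simp add: inverse_eq_divide add.commute)
    then show "(\<lambda>k. m + 1 / (real k + 1)) \<longlonglongrightarrow> m" using tendsto_add[of "\<lambda>k. m" m] by force
  qed
  define rb where "rb = m - (norm xb)\<^sup>2 / 2 - (norm ub)\<^sup>2 / 2"
  have R_eq: "R k = Qk k - (norm (X k))\<^sup>2 / 2 - (norm (U k))\<^sup>2 / 2" for k by (simp add: Qk_def Q_def)
  have R_lim: "R \<longlonglongrightarrow> rb" unfolding R_eq rb_def
    by (intro tendsto_intros Qk_lim xb ub) auto
  have inSb: "inS xb ub rb"
    unfolding inS_def
  proof (intro allI impI)
    fix y v assume yv: "v \<in> A y"
    have "(\<lambda>k. Lf y v (X k) (U k)) \<longlonglongrightarrow> Lf y v xb ub"
      unfolding Lf_def by (intro tendsto_intros xb ub)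
    moreover have "\<forall>k. Lf y v (X k) (U k) \<le> R k" using XUR(1) yv by (simp add: inS_def)
    ultimately show "Lf y v xb ub \<le> rb" using R_lim by (meson LIMSEQ_le)
  qed
  have Qb: "Q xb ub rb = m" by (simp add: Q_def rb_def)
  have key: "inner ((- ub) - y) ((- xb) - v) \<ge> (norm (xb + ub))\<^sup>2" if yv: "v \<in> A y" for y v
  proof -
    define a where "a = inner y v - rb + inner xb (y - xb) + inner ub (v - ub)"
    define b where "b = ((norm (xb - y))\<^sup>2 + (norm (ub - v))\<^sup>2) / 2"
    have "0 \<le> a + t * b" if t: "0 < t" "t \<le> 1" for t
    proof -
      have "m \<le> Q ((1 - t) *\<^sub>R xb + t *\<^sub>R y) ((1 - t) *\<^sub>R ub + t *\<^sub>R v) ((1 - t) * rb + t * inner y v)"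
        by (rule Qlow, rule F4[OF inSb F3[OF yv]]) (use t in auto)
      also have "\<dots> = m + t * (a + t * b)"
        unfolding Q_def mid_norm a_def b_def Qb[symmetric]
        unfolding power2_norm_eq_inner
        by (simp add: inner_diff_left inner_diff_right inner_commute algebra_simps) (simp add: field_simps)
      finally have "0 \<le> t * (a + t * b)" by simp
      then show ?thesis using t by (simp add: zero_le_mult_iff)
    qed
    then have "0 \<le> a" by (rule small_t_lemma)
    moreover have "inner xb ub \<le> rb" by (rule F1[OF inSb])
    ultimately show ?thesis
      unfolding a_def power2_norm_eq_inner
      by (simp add: inner_diff_left inner_diff_right inner_add_left inner_add_right inner_commute algebra_simps)
  qed
  have "- xb \<in> A (- ub)"
  proof (rule max_mono_extend[OF mm])
    fix y v assume "v \<in> A y"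
    from key[OF this] show "inner ((- ub) - y) ((- xb) - v) \<ge> 0"
      by (smt (verit) zero_le_power2)
  qed
  from key[OF this] have "(norm (xb + ub))\<^sup>2 \<le> 0" by simp
  then have "xb = - ub" by (simp add: add_eq_0_iff)
  then have "- (- ub) \<in> A (- ub)" using \<open>- xb \<in> A (- ub)\<close> by simp
  then show ?thesis by blast
qed

lemma mono_scale: "mono_op A \<Longrightarrow> c \<ge> 0 \<Longrightarrow> mono_op (op_scale c A)"
  unfolding mono_op_def op_scale_def
  by (auto simp: inner_diff_right[symmetric] scaleR_diff_right[symmetric] intro!: mult_nonneg_nonneg)

lemma mono_perturb: "mono_op A \<Longrightarrow> mono_op (op_perturb A w)"
  unfolding mono_op_def op_perturb_def
proof (intro allI impI)
  fix x y u v
  assume H: "\<forall>x y u v. u \<in> A x \<longrightarrow> v \<in> A y \<longrightarrow> 0 \<le> inner (x - y) (u - v)"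
    and u: "u \<in> A (x - w)" and v: "v \<in> A (y - w)"
  have "0 \<le> inner ((x - w) - (y - w)) (u - v)" using H u v by blast
  then show "0 \<le> inner (x - y) (u - v)" by simp
qed

lemma mono_add: "mono_op A \<Longrightarrow> mono_op B \<Longrightarrow> mono_op (op_add A B)"
  unfolding mono_op_def op_add_def
proof (intro allI impI)
  fix x y u v
  assume HA: "\<forall>x y u v. u \<in> A x \<longrightarrow> v \<in> A y \<longrightarrow> 0 \<le> inner (x - y) (u - v)"
    and HB: "\<forall>x y u v. u \<in> B x \<longrightarrow> v \<in> B y \<longrightarrow> 0 \<le> inner (x - y) (u - v)"
    and u: "u \<in> {a + b |a b. a \<in> A x \<and> b \<in> B x}" and v: "v \<in> {a + b |a b. a \<in> A y \<and> b \<in> B y}"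
  obtain a1 b1 where 1: "u = a1 + b1" "a1 \<in> A x" "b1 \<in> B x" using u by blast
  obtain a2 b2 where 2: "v = a2 + b2" "a2 \<in> A y" "b2 \<in> B y" using v by blast
  have "0 \<le> inner (x - y) (a1 - a2)" "0 \<le> inner (x - y) (b1 - b2)" using HA HB 1 2 by blast+
  moreover have "inner (x - y) (u - v) = inner (x - y) (a1 - a2) + inner (x - y) (b1 - b2)"
    using 1 2 by (simp add: inner_diff_right inner_add_right)
  ultimately show "0 \<le> inner (x - y) (u - v)" by simp
qed

lemma resolvent_eq:
  assumes "mono_op M" "x - y \<in> M y"
  shows "resolvent M x = y"
  unfolding resolvent_def
proof (rule the_equality)
  show "x - y \<in> M y" by fact
  fix y' assume "x - y' \<in> M y'"
  then have "0 \<le> inner (y' - y) ((x - y') - (x - y))" using assms unfolding mono_op_def by blast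
  also have "inner (y' - y) ((x - y') - (x - y)) = - inner (y' - y) (y' - y)"
    by (simp add: inner_diff_left inner_diff_right inner_commute)
  finally have "inner (y' - y) (y' - y) \<le> 0" by simp
  then show "y' = y" by (metis eq_iff_diff_eq_0 inner_gt_zero_iff not_le)
qed

lemma firm_ne:
  assumes "mono_op M" "x1 - y1 \<in> M y1" "x2 - y2 \<in> M y2"
  shows "(norm (y1 - y2))\<^sup>2 \<le> inner (y1 - y2) (x1 - x2)"
proof -
  have "0 \<le> inner (y1 - y2) ((x1 - y1) - (x2 - y2))" using assms unfolding mono_op_def by blast
  also have "\<dots> = inner (y1 - y2) (x1 - x2) - (norm (y1 - y2))\<^sup>2"
    unfolding power2_norm_eq_inner by (simp add: inner_diff_left inner_diff_right inner_commute)
  finally show ?thesis by simp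
qed

lemma max_mono_transform:
  fixes A :: "'a::real_inner \<Rightarrow> 'a set"
  assumes mm: "max_mono_op A" and g: "\<gamma> > 0"
  shows "max_mono_op (\<lambda>z. (\<lambda>a. \<gamma> *\<^sub>R a - y) ` A (z - w))"
    (is "max_mono_op ?A'")
proof -
  have mA: "mono_op A" using mm by (simp add: max_mono_op_def)
  have m1: "mono_op ?A'"
    unfolding mono_op_def
  proof (intro allI impI)
    fix z1 z2 b1 b2 assume b1: "b1 \<in> ?A' z1" and b2: "b2 \<in> ?A' z2"
    obtain a1 where a1: "a1 \<in> A (z1 - w)" "b1 = \<gamma> *\<^sub>R a1 - y" using b1 by blast
    obtain a2 where a2: "a2 \<in> A (z2 - w)" "b2 = \<gamma> *\<^sub>R a2 - y" using b2 by blast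
    have "0 \<le> inner ((z1 - w) - (z2 - w)) (a1 - a2)" using mA a1 a2 unfolding mono_op_def by blast
    then have "0 \<le> \<gamma> * inner (z1 - z2) (a1 - a2)" using g by simp
    also have "\<gamma> * inner (z1 - z2) (a1 - a2) = inner (z1 - z2) (b1 - b2)"
      unfolding a1(2) a2(2) by (simp add: inner_diff_right algebra_simps)
    finally show "0 \<le> inner (z1 - z2) (b1 - b2)" .
  qed
  have m2: "S = ?A'" if mS: "mono_op S" and sub: "\<forall>x. ?A' x \<subseteq> S x" for S
  proof -
    define S' where "S' x = (\<lambda>b. (1 / \<gamma>) *\<^sub>R (b + y)) ` S (x + w)" for x
    have "mono_op S'"
      unfolding mono_op_def
    proof (intro allI impI)
      fix x1 x2 c1 c2 assume c1: "c1 \<in> S' x1" and c2: "c2 \<in> S' x2"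
      obtain b1 where b1: "b1 \<in> S (x1 + w)" "c1 = (1 / \<gamma>) *\<^sub>R (b1 + y)" using c1 by (auto simp: S'_def)
      obtain b2 where b2: "b2 \<in> S (x2 + w)" "c2 = (1 / \<gamma>) *\<^sub>R (b2 + y)" using c2 by (auto simp: S'_def)
      have "0 \<le> inner ((x1 + w) - (x2 + w)) (b1 - b2)" using mS b1 b2 unfolding mono_op_def by blast
      then have "0 \<le> (1 / \<gamma>) * inner (x1 - x2) (b1 - b2)" using g by simp
      also have "(1 / \<gamma>) * inner (x1 - x2) (b1 - b2) = inner (x1 - x2) (c1 - c2)"
        using b1 b2 by (simp add: inner_diff_right inner_add_right algebra_simps)
      finally show "0 \<le> inner (x1 - x2) (c1 - c2)" .
    qed
    moreover have "\<forall>x. A x \<subseteq> S' x"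
    proof (intro allI subsetI)
      fix x a assume a: "a \<in> A x"
      have "\<gamma> *\<^sub>R a - y \<in> ?A' (x + w)" using a by auto
      then have "\<gamma> *\<^sub>R a - y \<in> S (x + w)" using sub by blast
      moreover have "a = (1 / \<gamma>) *\<^sub>R ((\<gamma> *\<^sub>R a - y) + y)" using g by simp
      ultimately show "a \<in> S' x" unfolding S'_def by blast
    qed
    ultimately have SA: "S' = A" using mm unfolding max_mono_op_def by blast
    have "S z \<subseteq> ?A' z" for z
    proof
      fix b assume b: "b \<in> S z"
      have "(1 / \<gamma>) *\<^sub>R (b + y) \<in> S' (z - w)" unfolding S'_def using b by auto
      then have "(1 / \<gamma>) *\<^sub>R (b + y) \<in> A (z - w)" using SA by simp
      moreover have "b = \<gamma> *\<^sub>R ((1 / \<gamma>) *\<^sub>R (b + y)) - y" using g by simp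
      ultimately show "b \<in> ?A' z" by blast
    qed
    then show ?thesis using sub by (intro ext) (simp add: subset_antisym)
  qed
  show ?thesis unfolding max_mono_op_def using m1 m2 by blast
qed

lemma resolvent_exists:
  fixes A :: "'a::{real_inner, complete_space} \<Rightarrow> 'a set"
  assumes mm: "max_mono_op A" and g: "\<gamma> > 0"
  shows "\<exists>z. y - z \<in> op_scale \<gamma> (op_perturb A w) z"
proof -
  obtain z where "- z \<in> (\<lambda>a. \<gamma> *\<^sub>R a - y) ` A (z - w)"
    using minty_core[OF max_mono_transform[OF mm g]] by blast
  then obtain a where a: "a \<in> A (z - w)" "- z = \<gamma> *\<^sub>R a - y" by blast
  then have "y - z = \<gamma> *\<^sub>R a" by (simp add: algebra_simps)
  then show ?thesis using a unfolding op_scale_def op_perturb_def by blast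
qed

lemma resolvent_spec:
  fixes A :: "'a::{real_inner, complete_space} \<Rightarrow> 'a set"
  assumes mm: "max_mono_op A" and g: "\<gamma> > 0"
  shows "y - resolvent (op_scale \<gamma> (op_perturb A w)) y \<in> op_scale \<gamma> (op_perturb A w) (resolvent (op_scale \<gamma> (op_perturb A w)) y)"
proof -
  obtain z where z: "y - z \<in> op_scale \<gamma> (op_perturb A w) z" using resolvent_exists[OF mm g] by blast
  have "mono_op (op_scale \<gamma> (op_perturb A w))"
    using mm g by (intro mono_scale mono_perturb) (auto simp: max_mono_op_def)
  from resolvent_eq[OF this z] z show ?thesis by simp
qed

definition lsup :: "(nat \<Rightarrow> real) \<Rightarrow> real" where
  "lsup s = Inf {a. eventually (\<lambda>n. s n \<le> a) sequentially}"

lemma lsup_set: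
  fixes s :: "nat \<Rightarrow> real"
  assumes "\<forall>n. \<bar>s n\<bar> \<le> M"
  shows "M \<in> {a. eventually (\<lambda>n. s n \<le> a) sequentially}"
    and "bdd_below {a. eventually (\<lambda>n. s n \<le> a) sequentially}"
proof -
  show "M \<in> {a. eventually (\<lambda>n. s n \<le> a) sequentially}"
  proof -
    have "\<forall>n. s n \<le> M" using assms by (simp add: abs_le_iff)
    then show ?thesis by (simp add: always_eventually)
  qed
  have "- M \<le> a" if ev: "eventually (\<lambda>n. s n \<le> a) sequentially" for a
  proof -
    obtain n where "s n \<le> a" using eventually_happens'[OF sequentially_bot ev] by auto
    moreover have "\<bar>s n\<bar> \<le> M" using assms by blast
    then have "- M \<le> s n" by (simp add: abs_le_iff)
    ultimately show ?thesis by simp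
  qed
  then show "bdd_below {a. eventually (\<lambda>n. s n \<le> a) sequentially}"
    unfolding bdd_below_def by blast
qed

lemma lsup_ev:
  assumes "\<forall>n. \<bar>s n\<bar> \<le> M" "e > 0"
  shows "eventually (\<lambda>n. s n \<le> lsup s + e) sequentially"
proof -
  have "Inf {a. eventually (\<lambda>n. s n \<le> a) sequentially} < lsup s + e" using assms(2) by (simp add: lsup_def)
  from cInf_lessD[OF _ this] lsup_set(1)[OF assms(1)]
  obtain a where ev: "eventually (\<lambda>n. s n \<le> a) sequentially" and lt: "a < lsup s + e" by blast
  show ?thesis using ev by (rule eventually_mono) (use lt in simp)
qed

lemma lsup_le:
  assumes "\<forall>n. \<bar>s n\<bar> \<le> M" "\<And>e. e > 0 \<Longrightarrow> eventually (\<lambda>n. s n \<le> b + e) sequentially"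
  shows "lsup s \<le> b"
proof (rule field_le_epsilon)
  fix e :: real assume "e > 0"
  show "lsup s \<le> b + e" unfolding lsup_def
    by (rule cInf_lower) (use assms \<open>e > 0\<close> lsup_set(2)[OF assms(1)] in auto)
qed

lemma lsup_ge:
  assumes "\<forall>n. \<bar>s n\<bar> \<le> M" "eventually (\<lambda>n. b \<le> s n) sequentially"
  shows "b \<le> lsup s"
proof (rule ccontr)
  assume "\<not> b \<le> lsup s"
  then have e: "(b - lsup s) / 2 > 0" by simp
  have "eventually (\<lambda>n. s n \<le> lsup s + (b - lsup s) / 2) sequentially" by (rule lsup_ev[OF assms(1) e])
  then have "eventually (\<lambda>n. s n \<le> lsup s + (b - lsup s) / 2 \<and> b \<le> s n) sequentially"
    using assms(2) by (rule eventually_conj)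
  then obtain n where "s n \<le> lsup s + (b - lsup s) / 2" "b \<le> s n" using eventually_happens'[OF sequentially_bot] by auto
  then show False using e by argo
qed

lemma lsup_lim:
  assumes "\<forall>n. \<bar>s n\<bar> \<le> M" "s \<longlonglongrightarrow> L"
  shows "lsup s = L"
proof (rule antisym)
  show "lsup s \<le> L"
  proof (rule lsup_le[OF assms(1)])
    fix e :: real assume "e > 0"
    then have "eventually (\<lambda>n. s n < L + e) sequentially" using order_tendstoD(2)[OF assms(2)] by simp
    then show "eventually (\<lambda>n. s n \<le> L + e) sequentially" by eventually_elim simp
  qed
  show "L \<le> lsup s"
  proof (rule field_le_epsilon)
    fix e :: real assume "e > 0"
    then have "eventually (\<lambda>n. L - e < s n) sequentially" using order_tendstoD(1)[OF assms(2)] by simp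
    then have "eventually (\<lambda>n. L - e \<le> s n) sequentially" by eventually_elim simp
    from lsup_ge[OF assms(1) this] show "L \<le> lsup s + e" by simp
  qed
qed

lemma cauchy_gen:
  fixes W :: "nat \<Rightarrow> 'a::real_normed_vector"
  assumes W: "\<And>k j. (norm (W k - W j))\<^sup>2 \<le> 4 * (1 / (real k + 1) + 1 / (real j + 1))"
  shows "Cauchy W"
proof (rule metric_CauchyI)
  fix e :: real assume e: "e > 0"
  obtain N :: nat where N: "8 / e\<^sup>2 < real N" using reals_Archimedean2 by blast
  have "\<forall>k\<ge>N. \<forall>j\<ge>N. dist (W k) (W j) < e"
  proof (intro allI impI)
    fix k j assume k: "k \<ge> N" and j: "j \<ge> N"
    have Np: "real N > 0" using N e by (smt (verit) divide_pos_pos zero_less_power)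
    have "1 / (real k + 1) \<le> 1 / real N" using k Np by (simp add: frac_le)
    moreover have "1 / (real j + 1) \<le> 1 / real N" using j Np by (simp add: frac_le)
    ultimately have "(norm (W k - W j))\<^sup>2 \<le> 8 / real N" using W[of k j] by simp
    also have "8 / real N < e\<^sup>2" using N e Np by (simp add: field_simps)
    finally have "(norm (W k - W j))\<^sup>2 < e\<^sup>2" .
    then have "norm (W k - W j) < e" using e by (simp add: power_less_imp_less_base)
    then show "dist (W k) (W j) < e" by (simp add: dist_norm)
  qed
  then show "\<exists>M. \<forall>k\<ge>M. \<forall>j\<ge>M. dist (W k) (W j) < e" by blast
qed

lemma norm_sq_tri:
  fixes a b :: "'a::real_normed_vector"
  shows "(norm (a + b))\<^sup>2 \<le> (norm a)\<^sup>2 + norm b * (2 * norm a + norm b)"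
proof -
  have "norm (a + b) \<le> norm a + norm b" by (rule norm_triangle_ineq)
  then have "(norm (a + b))\<^sup>2 \<le> (norm a + norm b)\<^sup>2" by (simp add: power_mono)
  also have "\<dots> = (norm a)\<^sup>2 + norm b * (2 * norm a + norm b)" by (simp add: power2_eq_square algebra_simps)
  finally show ?thesis .
qed

definition rho :: "(nat \<Rightarrow> 'a::real_inner) \<Rightarrow> 'a \<Rightarrow> real" where
  "rho u z = lsup (\<lambda>n. (norm (u n - z))\<^sup>2)"

lemma rho_bdd:
  fixes u :: "nat \<Rightarrow> 'a::real_inner"
  assumes "\<forall>n. norm (u n) \<le> B"
  shows "\<forall>n. \<bar>(norm (u n - z))\<^sup>2\<bar> \<le> (B + norm z)\<^sup>2"
proof
  fix n
  have "norm (u n - z) \<le> norm (u n) + norm z" by (rule norm_triangle_ineq4)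
  also have "\<dots> \<le> B + norm z" using assms by simp
  finally show "\<bar>(norm (u n - z))\<^sup>2\<bar> \<le> (B + norm z)\<^sup>2" by (simp add: power_mono)
qed

lemma rho_nonneg:
  fixes u :: "nat \<Rightarrow> 'a::real_inner"
  assumes "\<forall>n. norm (u n) \<le> B"
  shows "0 \<le> rho u z"
  unfolding rho_def by (rule lsup_ge[OF rho_bdd[OF assms]]) simp

lemma rho_lim:
  fixes u :: "nat \<Rightarrow> 'a::real_inner"
  assumes "\<forall>n. norm (u n) \<le> B" "(\<lambda>n. (norm (u n - z))\<^sup>2) \<longlonglongrightarrow> L"
  shows "rho u z = L"
  unfolding rho_def by (rule lsup_lim[OF rho_bdd[OF assms(1)] assms(2)])

lemma rho_mid:
  fixes u :: "nat \<Rightarrow> 'a::real_inner"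
  assumes B: "\<forall>n. norm (u n) \<le> B"
  shows "rho u ((1/2) *\<^sub>R (y + z)) \<le> rho u y / 2 + rho u z / 2 - (norm (y - z))\<^sup>2 / 4"
  unfolding rho_def
proof (rule lsup_le[OF rho_bdd[OF B]])
  fix e :: real assume e: "e > 0"
  have ey: "eventually (\<lambda>n. (norm (u n - y))\<^sup>2 \<le> rho u y + e) sequentially"
    unfolding rho_def by (rule lsup_ev[OF rho_bdd[OF B] e])
  have ez: "eventually (\<lambda>n. (norm (u n - z))\<^sup>2 \<le> rho u z + e) sequentially"
    unfolding rho_def by (rule lsup_ev[OF rho_bdd[OF B] e])
  have pt: "(norm (u n - (1/2) *\<^sub>R (y + z)))\<^sup>2
      = (norm (u n - y))\<^sup>2 / 2 + (norm (u n - z))\<^sup>2 / 2 - (norm (y - z))\<^sup>2 / 4" for n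
  proof -
    have "u n - (1/2) *\<^sub>R (y + z) = (1 - 1/2) *\<^sub>R (u n - y) + (1/2) *\<^sub>R (u n - z)"
      by (simp add: algebra_simps scaleR_add_left[symmetric])
    then have "(norm (u n - (1/2) *\<^sub>R (y + z)))\<^sup>2
       = (1 - 1/2) * (norm (u n - y))\<^sup>2 + (1/2) * (norm (u n - z))\<^sup>2 - (1/2) * (1 - 1/2) * (norm ((u n - y) - (u n - z)))\<^sup>2"
      by (simp only: mid_norm)
    also have "norm ((u n - y) - (u n - z)) = norm (y - z)" by (simp add: norm_minus_commute)
    finally show ?thesis by simp
  qed
  show "eventually (\<lambda>n. (norm (u n - (1/2) *\<^sub>R (y + z)))\<^sup>2
      \<le> lsup (\<lambda>n. (norm (u n - y))\<^sup>2) / 2 + lsup (\<lambda>n. (norm (u n - z))\<^sup>2) / 2 - (norm (y - z))\<^sup>2 / 4 + e)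
      sequentially"
    using ey ez unfolding rho_def
  proof eventually_elim
    case (elim n)
    then show ?case unfolding pt using e by argo
  qed
qed

lemma rho_lip:
  fixes u :: "nat \<Rightarrow> 'a::real_inner"
  assumes B: "\<forall>n. norm (u n) \<le> B"
  shows "rho u c \<le> rho u z + norm (z - c) * (2 * (B + norm z) + norm (z - c))"
  unfolding rho_def
proof (rule lsup_le[OF rho_bdd[OF B]])
  fix e :: real assume e: "e > 0"
  have ez: "eventually (\<lambda>n. (norm (u n - z))\<^sup>2 \<le> rho u z + e) sequentially"
    unfolding rho_def by (rule lsup_ev[OF rho_bdd[OF B] e])
  have pt: "(norm (u n - c))\<^sup>2 \<le> (norm (u n - z))\<^sup>2 + norm (z - c) * (2 * (B + norm z) + norm (z - c))" for n
  proof -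
    have "(norm (u n - c))\<^sup>2 = (norm ((u n - z) + (z - c)))\<^sup>2" by simp
    also have "\<dots> \<le> (norm (u n - z))\<^sup>2 + norm (z - c) * (2 * norm (u n - z) + norm (z - c))"
      by (rule norm_sq_tri)
    also have "norm (u n - z) \<le> B + norm z"
      using norm_triangle_ineq4[of "u n" z] B by (smt (verit))
    then have "norm (z - c) * (2 * norm (u n - z) + norm (z - c)) \<le> norm (z - c) * (2 * (B + norm z) + norm (z - c))"
      by (intro mult_left_mono) auto
    finally show ?thesis by simp
  qed
  show "eventually (\<lambda>n. (norm (u n - c))\<^sup>2
      \<le> lsup (\<lambda>n. (norm (u n - z))\<^sup>2) + norm (z - c) * (2 * (B + norm z) + norm (z - c)) + e) sequentially"
    using ez unfolding rho_def
  proof eventually_elim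
    case (elim n)
    then show ?case using pt[of n] by argo
  qed
qed

lemma inv_seq_lim: "(\<lambda>k. 1 / (real k + 1)) \<longlonglongrightarrow> 0"
  using LIMSEQ_inverse_real_of_nat_add[of 0] by (simp add: inverse_eq_divide add.commute)

lemma center_exists:
  fixes u :: "nat \<Rightarrow> 'a::{real_inner, complete_space}"
  assumes B: "\<forall>n. norm (u n) \<le> B"
  shows "\<exists>c. \<forall>z. rho u c \<le> rho u z"
proof -
  define m where "m = Inf (range (rho u))"
  have bdd: "bdd_below (range (rho u))" unfolding bdd_below_def using rho_nonneg[OF B] by blast
  have low: "m \<le> rho u z" for z unfolding m_def by (rule cINF_lower[OF bdd]) simp
  have "\<exists>z. rho u z < m + 1 / (real k + 1)" for k
  proof -
    have "Inf (range (rho u)) < m + 1 / (real k + 1)" by (simp add: m_def)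
    from cInf_lessD[OF _ this] show ?thesis by auto
  qed
  then obtain Z where Z: "\<And>k. rho u (Z k) < m + 1 / (real k + 1)" by metis
  have "(norm (Z k - Z j))\<^sup>2 \<le> 4 * (1 / (real k + 1) + 1 / (real j + 1))" for k j
  proof -
    have "m \<le> rho u ((1/2) *\<^sub>R (Z k + Z j))" by (rule low)
    also have "\<dots> \<le> rho u (Z k) / 2 + rho u (Z j) / 2 - (norm (Z k - Z j))\<^sup>2 / 4" by (rule rho_mid[OF B])
    finally have H: "m \<le> rho u (Z k) / 2 + rho u (Z j) / 2 - (norm (Z k - Z j))\<^sup>2 / 4" .
    define ik where "ik = 1 / (real k + 1)"
    define ij where "ij = 1 / (real j + 1)"
    have "ik \<ge> 0" "ij \<ge> 0" by (simp_all add: ik_def ij_def)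
    moreover have "rho u (Z k) < m + ik" "rho u (Z j) < m + ij" using Z by (simp_all add: ik_def ij_def)
    ultimately have "(norm (Z k - Z j))\<^sup>2 \<le> 4 * (ik + ij)" using H by argo
    then show ?thesis by (simp add: ik_def ij_def)
  qed
  then have "Cauchy Z" by (rule cauchy_gen)
  then obtain c where Zc: "Z \<longlonglongrightarrow> c" using Cauchy_convergent convergent_def by blast
  then have "Bseq Z" using convergent_imp_Bseq convergent_def by blast
  then obtain C where C: "\<And>k. norm (Z k) \<le> C" unfolding Bseq_def by blast
  define d where "d k = norm (Z k - c)" for k
  have d0: "d \<longlonglongrightarrow> 0"
  proof -
    have "(\<lambda>k. Z k - c) \<longlonglongrightarrow> c - c" by (intro tendsto_intros Zc)
    then have "(\<lambda>k. norm (Z k - c)) \<longlonglongrightarrow> norm (c - c)" by (rule tendsto_norm)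
    then show ?thesis by (simp add: d_def[abs_def])
  qed
  define b where "b k = m + 1 / (real k + 1) + d k * (2 * (B + C) + d k)" for k
  have "b \<longlonglongrightarrow> m + 0 + 0 * (2 * (B + C) + 0)"
    unfolding b_def by (intro tendsto_intros inv_seq_lim d0)
  then have bl: "b \<longlonglongrightarrow> m" by simp
  have "rho u c \<le> b k" for k
  proof -
    have "rho u c \<le> rho u (Z k) + d k * (2 * (B + norm (Z k)) + d k)"
      unfolding d_def by (rule rho_lip[OF B])
    also have "d k * (2 * (B + norm (Z k)) + d k) \<le> d k * (2 * (B + C) + d k)"
      using C[of k] by (intro mult_left_mono) (auto simp: d_def)
    finally show ?thesis using Z[of k] by (simp add: b_def)
  qed
  then have "rho u c \<le> m" using bl by (intro LIMSEQ_le_const[OF bl]) auto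
  then show ?thesis using low by (meson order_trans)
qed

lemma center_fixed:
  fixes u :: "nat \<Rightarrow> 'a::{real_inner, complete_space}"
  assumes ne: "\<forall>a b. norm (T a - T b) \<le> norm (a - b)" and B: "\<forall>n. norm (u n) \<le> B"
    and asy: "(\<lambda>n. u n - T (u n)) \<longlonglongrightarrow> 0" and mn: "\<forall>z. rho u c \<le> rho u z"
  shows "T c = c"
proof -
  have "rho u (T c) \<le> rho u c"
    unfolding rho_def
  proof (rule lsup_le[OF rho_bdd[OF B]])
    fix e :: real assume e: "e > 0"
    define en where "en n = norm (u n - T (u n))" for n
    have "(\<lambda>n. norm (u n - T (u n))) \<longlonglongrightarrow> norm (0::'a)" using asy by (rule tendsto_norm)
    then have en0: "en \<longlonglongrightarrow> 0" by (simp add: en_def[abs_def])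
    have "(\<lambda>n. en n * (2 * (B + norm c) + en n)) \<longlonglongrightarrow> 0 * (2 * (B + norm c) + 0)"
      by (intro tendsto_intros en0)
    then have "eventually (\<lambda>n. en n * (2 * (B + norm c) + en n) < e / 2) sequentially"
      using e by (intro order_tendstoD(2)) auto
    moreover have "eventually (\<lambda>n. (norm (u n - c))\<^sup>2 \<le> rho u c + e / 2) sequentially"
      unfolding rho_def by (rule lsup_ev[OF rho_bdd[OF B]]) (use e in simp)
    ultimately show "eventually (\<lambda>n. (norm (u n - T c))\<^sup>2 \<le> lsup (\<lambda>n. (norm (u n - c))\<^sup>2) + e) sequentially"
    proof eventually_elim
      case (elim n)
      have "(norm (u n - T c))\<^sup>2 = (norm ((T (u n) - T c) + (u n - T (u n))))\<^sup>2" by (simp add: algebra_simps)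
      also have "\<dots> \<le> (norm (T (u n) - T c))\<^sup>2 + en n * (2 * norm (T (u n) - T c) + en n)"
        unfolding en_def by (rule norm_sq_tri)
      also have "\<dots> \<le> (norm (u n - c))\<^sup>2 + en n * (2 * (B + norm c) + en n)"
      proof -
        have a: "norm (T (u n) - T c) \<le> norm (u n - c)" using ne by blast
        have "norm (u n - c) \<le> B + norm c" using norm_triangle_ineq4[of "u n" c] B by (smt (verit))
        then have "en n * (2 * norm (T (u n) - T c) + en n) \<le> en n * (2 * (B + norm c) + en n)"
          using a by (intro mult_left_mono) (auto simp: en_def)
        moreover have "(norm (T (u n) - T c))\<^sup>2 \<le> (norm (u n - c))\<^sup>2" using a by (simp add: power_mono)
        ultimately show ?thesis by linarith
      qed
      finally show ?case using elim unfolding rho_def by argo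
    qed
  qed
  moreover have "rho u c \<le> rho u ((1/2) *\<^sub>R (c + T c))" using mn by blast
  moreover have "rho u ((1/2) *\<^sub>R (c + T c)) \<le> rho u c / 2 + rho u (T c) / 2 - (norm (c - T c))\<^sup>2 / 4"
    by (rule rho_mid[OF B])
  ultimately have "(norm (c - T c))\<^sup>2 \<le> 0" by argo
  then show ?thesis by simp
qed

lemma norm_diff_scale_sq:
  fixes a b :: "'a::real_inner"
  shows "(norm (a - t *\<^sub>R b))\<^sup>2 = (norm a)\<^sup>2 - 2 * t * inner a b + t\<^sup>2 * (norm b)\<^sup>2"
  unfolding power2_norm_eq_inner
  by (simp add: inner_diff_left inner_diff_right inner_commute power2_eq_square algebra_simps)

lemma t_alg:
  fixes l d N :: real
  assumes "N > 0"
  shows "l - 2 * (d / N) * d + (d / N)\<^sup>2 * N = l - d\<^sup>2 / N"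
  using assms by (simp add: power2_eq_square field_simps)

lemma weak_conv_thm:
  fixes x :: "nat \<Rightarrow> 'a::{real_inner, complete_space}"
  assumes ne: "\<forall>a b. norm (T a - T b) \<le> norm (a - b)"
    and B: "\<forall>n. norm (x n) \<le> B"
    and fej: "\<And>f. T f = f \<Longrightarrow> convergent (\<lambda>n. norm (x n - f))"
    and asy: "(\<lambda>n. x n - T (x n)) \<longlonglongrightarrow> 0"
  shows "\<exists>c. T c = c \<and> weak_conv x c"
proof -
  obtain c where cmin: "\<forall>z. rho x c \<le> rho x z" using center_exists[OF B] by blast
  have Tc: "T c = c" by (rule center_fixed[OF ne B asy cmin])
  have "(\<lambda>n. inner (x n) y) \<longlonglongrightarrow> inner c y" for y
  proof (rule ccontr)
    define s where "s n = inner (x n - c) y" for n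
    assume nc: "\<not> (\<lambda>n. inner (x n) y) \<longlonglongrightarrow> inner c y"
    have "\<not> s \<longlonglongrightarrow> 0"
    proof
      assume "s \<longlonglongrightarrow> 0"
      then have "(\<lambda>n. s n + inner c y) \<longlonglongrightarrow> 0 + inner c y" by (intro tendsto_intros)
      then show False using nc by (simp add: s_def inner_diff_left)
    qed
    then have "\<not> (\<forall>r>0. \<exists>N. \<forall>n\<ge>N. \<bar>s n\<bar> < r)"
      unfolding lim_sequentially dist_real_def by simp
    then obtain e where e0: "e > 0" and e1: "\<not> (\<exists>N. \<forall>n\<ge>N. \<bar>s n\<bar> < e)" by blast
    from e1 have e2: "\<forall>N. \<exists>n\<ge>N. e \<le> \<bar>s n\<bar>" by (simp add: not_less)
    note e = e0 e2
    have inf: "infinite {n. e \<le> \<bar>s n\<bar>}" using e(2) by (simp add: infinite_nat_iff_unbounded_le)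
    obtain r1 :: "nat \<Rightarrow> nat" where r1: "strict_mono r1" "\<forall>n. r1 n \<in> {n. e \<le> \<bar>s n\<bar>}"
      using infinite_enumerate[OF inf] by blast
    have sb: "\<bar>s n\<bar> \<le> (B + norm c) * norm y" for n
    proof -
      have "\<bar>s n\<bar> \<le> norm (x n - c) * norm y" unfolding s_def by (rule Cauchy_Schwarz_ineq2)
      also have "norm (x n - c) \<le> B + norm c" using norm_triangle_ineq4[of "x n" c] B[rule_format, of n] by linarith
      then have "norm (x n - c) * norm y \<le> (B + norm c) * norm y" by (intro mult_right_mono) auto
      finally show ?thesis .
    qed
    have bs: "bounded (range (s \<circ> r1))"
      unfolding bounded_iff by (intro exI[of _ "(B + norm c) * norm y"]) (auto simp: sb)
    obtain \<delta> r2 where r2: "strict_mono r2" "((s \<circ> r1) \<circ> r2) \<longlonglongrightarrow> \<delta>"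
      using bounded_imp_convergent_subsequence[OF bs] by blast
    define r where "r = r1 \<circ> r2"
    have rm: "strict_mono r" unfolding r_def using r1(1) r2(1) by (rule strict_mono_o)
    have sd: "(\<lambda>k. s (r k)) \<longlonglongrightarrow> \<delta>" using r2(2) by (simp add: r_def o_def)
    have "e \<le> \<bar>\<delta>\<bar>"
    proof (rule LIMSEQ_le_const)
      show "(\<lambda>k. \<bar>s (r k)\<bar>) \<longlonglongrightarrow> \<bar>\<delta>\<bar>" using sd by (rule tendsto_rabs)
      show "\<exists>N. \<forall>n\<ge>N. e \<le> \<bar>s (r n)\<bar>" using r1(2) by (auto simp: r_def)
    qed
    then have dpos: "\<delta> \<noteq> 0" using e(1) by auto
    have y0: "y \<noteq> 0"
    proof
      assume "y = 0"
      then have "s = (\<lambda>n. 0)" by (simp add: s_def[abs_def])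
      then have "(\<lambda>k. s (r k)) \<longlonglongrightarrow> 0" by simp
      from LIMSEQ_unique[OF sd this] dpos show False by simp
    qed
    define u where "u k = x (r k)" for k
    have Bu: "\<forall>k. norm (u k) \<le> B" using B by (simp add: u_def)
    have asyu: "(\<lambda>k. u k - T (u k)) \<longlonglongrightarrow> 0"
      using LIMSEQ_subseq_LIMSEQ[OF asy rm] by (simp add: u_def o_def)
    obtain c' where c'min: "\<forall>z. rho u c' \<le> rho u z" using center_exists[OF Bu] by blast
    have Tc': "T c' = c'" by (rule center_fixed[OF ne Bu asyu c'min])
    obtain lc where lc: "(\<lambda>n. norm (x n - c)) \<longlonglongrightarrow> lc" using fej[OF Tc] convergent_def by blast
    obtain lc' where lc': "(\<lambda>n. norm (x n - c')) \<longlonglongrightarrow> lc'" using fej[OF Tc'] convergent_def by blast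
    have sq: "(\<lambda>n. (norm (x n - c))\<^sup>2) \<longlonglongrightarrow> lc\<^sup>2" using lc by (intro tendsto_intros)
    have sq': "(\<lambda>n. (norm (x n - c'))\<^sup>2) \<longlonglongrightarrow> lc'\<^sup>2" using lc' by (intro tendsto_intros)
    have usq: "(\<lambda>k. (norm (u k - c))\<^sup>2) \<longlonglongrightarrow> lc\<^sup>2"
      using LIMSEQ_subseq_LIMSEQ[OF sq rm] by (simp add: u_def o_def)
    have usq': "(\<lambda>k. (norm (u k - c'))\<^sup>2) \<longlonglongrightarrow> lc'\<^sup>2"
      using LIMSEQ_subseq_LIMSEQ[OF sq' rm] by (simp add: u_def o_def)
    have r1x: "rho x c = lc\<^sup>2" by (rule rho_lim[OF B sq])
    have r2x: "rho x c' = lc'\<^sup>2" by (rule rho_lim[OF B sq'])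
    have "rho x c \<le> rho x c'" using cmin by blast
    then have l1: "lc\<^sup>2 \<le> lc'\<^sup>2" unfolding r1x r2x .
    have l2: "rho u c' = lc'\<^sup>2" by (rule rho_lim[OF Bu usq'])
    define t where "t = \<delta> / (norm y)\<^sup>2"
    have ny: "(norm y)\<^sup>2 > 0" using y0 by simp
    have pt: "(norm (u k - (c + t *\<^sub>R y)))\<^sup>2 = (norm (u k - c))\<^sup>2 - 2 * t * s (r k) + t\<^sup>2 * (norm y)\<^sup>2" for k
    proof -
      have "u k - (c + t *\<^sub>R y) = (u k - c) - t *\<^sub>R y" by (simp add: algebra_simps)
      then have "(norm (u k - (c + t *\<^sub>R y)))\<^sup>2 = (norm ((u k - c) - t *\<^sub>R y))\<^sup>2" by metis
      also have "\<dots> = (norm (u k - c))\<^sup>2 - 2 * t * inner (u k - c) y + t\<^sup>2 * (norm y)\<^sup>2"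
        by (rule norm_diff_scale_sq)
      finally show ?thesis by (simp add: s_def u_def)
    qed
    have "(\<lambda>k. (norm (u k - (c + t *\<^sub>R y)))\<^sup>2) \<longlonglongrightarrow> lc\<^sup>2 - 2 * t * \<delta> + t\<^sup>2 * (norm y)\<^sup>2"
      unfolding pt by (intro tendsto_intros usq sd)
    then have "rho u (c + t *\<^sub>R y) = lc\<^sup>2 - 2 * t * \<delta> + t\<^sup>2 * (norm y)\<^sup>2" by (rule rho_lim[OF Bu])
    also have "\<dots> = lc\<^sup>2 - \<delta>\<^sup>2 / (norm y)\<^sup>2"
      unfolding t_def by (rule t_alg[OF ny])
    finally have l3: "rho u (c + t *\<^sub>R y) = lc\<^sup>2 - \<delta>\<^sup>2 / (norm y)\<^sup>2" .
    have "\<delta>\<^sup>2 / (norm y)\<^sup>2 > 0" using dpos ny by simp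
    moreover have "rho u c' \<le> rho u (c + t *\<^sub>R y)" using c'min by blast
    ultimately show False using l1 l2 l3 by argo
  qed
  then show ?thesis using Tc unfolding weak_conv_def by blast
qed

locale km =
  fixes T :: "'a::real_inner \<Rightarrow> 'a" and lam :: "nat \<Rightarrow> real" and x :: "nat \<Rightarrow> 'a"
  assumes ne: "\<forall>a b. norm (T a - T b) \<le> norm (a - b)"
    and lam: "\<forall>n. 0 \<le> lam n \<and> lam n \<le> 1"
    and rec: "\<forall>n. x (Suc n) = (1 - lam n) *\<^sub>R x n + lam n *\<^sub>R T (x n)"
begin

lemma step:
  assumes f: "T f = f"
  shows "(norm (x (Suc n) - f))\<^sup>2 \<le> (norm (x n - f))\<^sup>2 - lam n * (1 - lam n) * (norm (x n - T (x n)))\<^sup>2"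
proof -
  have "x (Suc n) - f = (1 - lam n) *\<^sub>R (x n - f) + lam n *\<^sub>R (T (x n) - f)"
    using rec by (simp add: algebra_simps)
  then have "(norm (x (Suc n) - f))\<^sup>2 = (1 - lam n) * (norm (x n - f))\<^sup>2 + lam n * (norm (T (x n) - f))\<^sup>2
      - lam n * (1 - lam n) * (norm ((x n - f) - (T (x n) - f)))\<^sup>2"
    by (simp only: mid_norm)
  also have "(x n - f) - (T (x n) - f) = x n - T (x n)" by simp
  also have "lam n * (norm (T (x n) - f))\<^sup>2 \<le> lam n * (norm (x n - f))\<^sup>2"
  proof -
    have "norm (T (x n) - f) \<le> norm (x n - f)" using ne f by metis
    then have "(norm (T (x n) - f))\<^sup>2 \<le> (norm (x n - f))\<^sup>2" by (simp add: power_mono)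
    then show ?thesis using lam by (simp add: mult_left_mono)
  qed
  finally show ?thesis by (simp add: algebra_simps)
qed

lemma dec:
  assumes f: "T f = f"
  shows "norm (x (Suc n) - f) \<le> norm (x n - f)"
proof -
  have "0 \<le> lam n * (1 - lam n) * (norm (x n - T (x n)))\<^sup>2" using lam by simp
  then have "(norm (x (Suc n) - f))\<^sup>2 \<le> (norm (x n - f))\<^sup>2" using step[OF f, of n] by linarith
  then show ?thesis by (simp add: power2_le_iff_abs_le)
qed

lemma bound:
  assumes f: "T f = f"
  shows "norm (x n - f) \<le> norm (x 0 - f)"
proof -
  have "decseq (\<lambda>n. norm (x n - f))" using dec[OF f] by (simp add: decseq_Suc_iff)
  from decseqD[OF this, of 0 n] show ?thesis by simp
qed

lemma conv:
  assumes f: "T f = f"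
  shows "convergent (\<lambda>n. norm (x n - f))"
proof -
  have "decseq (\<lambda>n. norm (x n - f))" using dec[OF f] by (simp add: decseq_Suc_iff)
  then obtain L where "(\<lambda>n. norm (x n - f)) \<longlonglongrightarrow> L"
    using decseq_convergent[of "\<lambda>n. norm (x n - f)" 0] by auto
  then show ?thesis by (auto simp: convergent_def)
qed

lemma D_dec: "norm (x (Suc n) - T (x (Suc n))) \<le> norm (x n - T (x n))"
proof -
  have e: "x (Suc n) - x n = lam n *\<^sub>R (T (x n) - x n)" using rec by (simp add: algebra_simps)
  have "T (x (Suc n)) - x (Suc n) = (T (x (Suc n)) - T (x n)) + (1 - lam n) *\<^sub>R (T (x n) - x n)"
    using rec by (simp add: algebra_simps)
  then have "norm (T (x (Suc n)) - x (Suc n)) \<le> norm (T (x (Suc n)) - T (x n)) + norm ((1 - lam n) *\<^sub>R (T (x n) - x n))"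
    by (metis norm_triangle_ineq)
  also have "norm (T (x (Suc n)) - T (x n)) \<le> norm (x (Suc n) - x n)" using ne by blast
  also have "norm (x (Suc n) - x n) = lam n * norm (T (x n) - x n)" using e lam by simp
  also have "norm ((1 - lam n) *\<^sub>R (T (x n) - x n)) = (1 - lam n) * norm (T (x n) - x n)" using lam by simp
  finally have "norm (T (x (Suc n)) - x (Suc n)) \<le> norm (T (x n) - x n)" by (simp add: algebra_simps)
  then show ?thesis by (simp add: norm_minus_commute)
qed

lemma asy:
  assumes f: "T f = f" and ns: "\<not> summable (\<lambda>n. lam n * (1 - lam n))"
  shows "(\<lambda>n. x n - T (x n)) \<longlonglongrightarrow> 0"
proof -
  define D where "D n = norm (x n - T (x n))" for n
  have "decseq D" using D_dec by (simp add: decseq_Suc_iff D_def)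
  then obtain L where L: "D \<longlonglongrightarrow> L" "\<forall>i. L \<le> D i"
    using decseq_convergent[of D 0] by (auto simp: D_def)
  have L0: "0 \<le> L" using L(1) by (rule LIMSEQ_le_const) (auto simp: D_def)
  have psum: "(\<Sum>i<n. lam i * (1 - lam i) * (D i)\<^sup>2) \<le> (norm (x 0 - f))\<^sup>2 - (norm (x n - f))\<^sup>2" for n
  proof (induction n)
    case 0 then show ?case by simp
  next
    case (Suc n)
    then show ?case using step[OF f, of n] by (simp add: D_def)
  qed
  have sm: "summable (\<lambda>i. lam i * (1 - lam i) * (D i)\<^sup>2)"
  proof (rule summableI_nonneg_bounded)
    show "0 \<le> lam n * (1 - lam n) * (D n)\<^sup>2" for n using lam by simp
    show "(\<Sum>i<n. lam i * (1 - lam i) * (D i)\<^sup>2) \<le> (norm (x 0 - f))\<^sup>2" for n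
      using psum[of n] by (smt (verit) zero_le_power2)
  qed
  have "L = 0"
  proof (rule ccontr)
    assume "L \<noteq> 0"
    then have Lp: "L > 0" using L0 by simp
    have "summable (\<lambda>i. lam i * (1 - lam i) * L\<^sup>2)"
    proof (rule summable_comparison_test'[OF sm])
      fix n
      have "L\<^sup>2 \<le> (D n)\<^sup>2" using L(2) L0 by (simp add: power_mono)
      moreover have "0 \<le> lam n * (1 - lam n)" using lam by simp
      ultimately have "lam n * (1 - lam n) * L\<^sup>2 \<le> lam n * (1 - lam n) * (D n)\<^sup>2" by (rule mult_left_mono)
      then show "norm (lam n * (1 - lam n) * L\<^sup>2) \<le> lam n * (1 - lam n) * (D n)\<^sup>2"
        using lam by simp
    qed
    then have "summable (\<lambda>i. lam i * (1 - lam i) * L\<^sup>2 / L\<^sup>2)" by (rule summable_divide)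
    then show False using ns Lp by simp
  qed
  then have "(\<lambda>n. norm (x n - T (x n))) \<longlonglongrightarrow> 0" using L(1) by (simp add: D_def[abs_def])
  then show ?thesis by (simp add: tendsto_norm_zero_iff)
qed

end

lemma R_ne:
  fixes J :: "'a::real_inner \<Rightarrow> 'a"
  assumes firm: "\<And>y1 y2. (norm (J y1 - J y2))\<^sup>2 \<le> inner (J y1 - J y2) (y1 - y2)"
    and b: "0 \<le> \<beta>"
  shows "(norm (((2 * \<beta>) *\<^sub>R J y1 - y1) - ((2 * \<beta>) *\<^sub>R J y2 - y2)))\<^sup>2
     \<le> (norm (y1 - y2))\<^sup>2 - 4 * \<beta> * (1 - \<beta>) * (norm (J y1 - J y2))\<^sup>2"
proof -
  have "((2 * \<beta>) *\<^sub>R J y1 - y1) - ((2 * \<beta>) *\<^sub>R J y2 - y2) = - ((y1 - y2) - (2 * \<beta>) *\<^sub>R (J y1 - J y2))"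
    by (simp add: algebra_simps)
  then have "(norm (((2 * \<beta>) *\<^sub>R J y1 - y1) - ((2 * \<beta>) *\<^sub>R J y2 - y2)))\<^sup>2
      = (norm ((y1 - y2) - (2 * \<beta>) *\<^sub>R (J y1 - J y2)))\<^sup>2" by (metis norm_minus_cancel)
  also have "\<dots> = (norm (y1 - y2))\<^sup>2 - 2 * (2 * \<beta>) * inner (y1 - y2) (J y1 - J y2) + (2 * \<beta>)\<^sup>2 * (norm (J y1 - J y2))\<^sup>2"
    by (rule norm_diff_scale_sq)
  also have "\<dots> \<le> (norm (y1 - y2))\<^sup>2 - 2 * (2 * \<beta>) * (norm (J y1 - J y2))\<^sup>2 + (2 * \<beta>)\<^sup>2 * (norm (J y1 - J y2))\<^sup>2"
  proof -
    have "(norm (J y1 - J y2))\<^sup>2 \<le> inner (y1 - y2) (J y1 - J y2)" using firm by (simp add: inner_commute)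
    then have "2 * (2 * \<beta>) * (norm (J y1 - J y2))\<^sup>2 \<le> 2 * (2 * \<beta>) * inner (y1 - y2) (J y1 - J y2)"
      using b by (intro mult_left_mono) auto
    then show ?thesis by linarith
  qed
  also have "\<dots> = (norm (y1 - y2))\<^sup>2 - 4 * \<beta> * (1 - \<beta>) * (norm (J y1 - J y2))\<^sup>2"
    by (simp add: power2_eq_square algebra_simps)
  finally show ?thesis .
qed

theorem theorem3p5:
  fixes A B :: "'a::{real_inner, complete_space} \<Rightarrow> 'a set"
    and \<gamma> \<beta> :: real and lam :: "nat \<Rightarrow> real" and q :: 'a and x :: "nat \<Rightarrow> 'a"
  assumes "max_mono_op A" and "max_mono_op B"
    and "\<gamma> > 0"
    and "\<And>n. 0 \<le> lam n \<and> lam n \<le> 1"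
    and "\<not> summable (\<lambda>n. lam n * (1 - lam n))"
    and "0 < \<beta>" and "\<beta> < 1"
    and "q \<in> ran_id_plus (op_scale (\<gamma> / (2 * (1 - \<beta>))) (op_add A B))"
    and "\<And>n. x (Suc n) = (1 - lam n) *\<^sub>R x n + lam n *\<^sub>R
            ((\<lambda>y. (2 * \<beta>) *\<^sub>R resolvent (op_scale \<gamma> (op_perturb B (- q))) y - y)
              ((\<lambda>y. (2 * \<beta>) *\<^sub>R resolvent (op_scale \<gamma> (op_perturb A (- q))) y - y) (x n)))"
  shows "\<exists>xs. xs = (\<lambda>y. (2 * \<beta>) *\<^sub>R resolvent (op_scale \<gamma> (op_perturb B (- q))) y - y)
                    ((\<lambda>y. (2 * \<beta>) *\<^sub>R resolvent (op_scale \<gamma> (op_perturb A (- q))) y - y) xs)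
          \<and> (\<lambda>n. x (Suc n) - x n) \<longlonglongrightarrow> 0
          \<and> weak_conv x xs
          \<and> resolvent (op_scale \<gamma> A) (q + xs)
              = resolvent (op_scale (\<gamma> / (2 * (1 - \<beta>))) (op_add A B)) q
          \<and> (\<lambda>n. resolvent (op_scale \<gamma> A) (q + x n))
              \<longlonglongrightarrow> resolvent (op_scale (\<gamma> / (2 * (1 - \<beta>))) (op_add A B)) q"
proof -
  note mmA = assms(1) and mmB = assms(2) and g = assms(3) and lam = assms(4) and ns = assms(5)
    and b0 = assms(6) and b1 = assms(7) and qran = assms(8) and recx = assms(9)
  define MA where "MA = op_scale \<gamma> (op_perturb A (- q))"
  define MB where "MB = op_scale \<gamma> (op_perturb B (- q))"
  define JA where "JA = resolvent MA"
  define JB where "JB = resolvent MB"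
  define RA where "RA y = (2 * \<beta>) *\<^sub>R JA y - y" for y
  define RB where "RB y = (2 * \<beta>) *\<^sub>R JB y - y" for y
  define T where "T y = RB (RA y)" for y
  define cc where "cc = \<gamma> / (2 * (1 - \<beta>))"
  define P where "P = resolvent (op_scale cc (op_add A B)) q"
  have monoA: "mono_op A" and monoB: "mono_op B" using mmA mmB by (simp_all add: max_mono_op_def)
  have mMA: "mono_op MA" unfolding MA_def using monoA g by (intro mono_scale mono_perturb) auto
  have mMB: "mono_op MB" unfolding MB_def using monoB g by (intro mono_scale mono_perturb) auto
  have JA_spec: "y - JA y \<in> MA (JA y)" for y unfolding JA_def MA_def by (rule resolvent_spec[OF mmA g])
  have JB_spec: "y - JB y \<in> MB (JB y)" for y unfolding JB_def MB_def by (rule resolvent_spec[OF mmB g])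
  have firmA: "(norm (JA y1 - JA y2))\<^sup>2 \<le> inner (JA y1 - JA y2) (y1 - y2)" for y1 y2
    by (rule firm_ne[OF mMA JA_spec JA_spec])
  have firmB: "(norm (JB y1 - JB y2))\<^sup>2 \<le> inner (JB y1 - JB y2) (y1 - y2)" for y1 y2
    by (rule firm_ne[OF mMB JB_spec JB_spec])
  have b0': "0 \<le> \<beta>" using b0 by simp
  have RA_ne: "(norm (RA y1 - RA y2))\<^sup>2 \<le> (norm (y1 - y2))\<^sup>2 - 4 * \<beta> * (1 - \<beta>) * (norm (JA y1 - JA y2))\<^sup>2" for y1 y2
    unfolding RA_def by (rule R_ne[OF firmA b0'])
  have RB_ne: "(norm (RB y1 - RB y2))\<^sup>2 \<le> (norm (y1 - y2))\<^sup>2 - 4 * \<beta> * (1 - \<beta>) * (norm (JB y1 - JB y2))\<^sup>2" for y1 y2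
    unfolding RB_def by (rule R_ne[OF firmB b0'])
  have bb: "0 < 4 * \<beta> * (1 - \<beta>)" using b0 b1 by simp
  have T_ne2: "(norm (T y1 - T y2))\<^sup>2 \<le> (norm (y1 - y2))\<^sup>2 - 4 * \<beta> * (1 - \<beta>) * (norm (JA y1 - JA y2))\<^sup>2" for y1 y2
  proof -
    have "(norm (T y1 - T y2))\<^sup>2 \<le> (norm (RA y1 - RA y2))\<^sup>2"
      unfolding T_def using RB_ne[of "RA y1" "RA y2"] bb
      by (smt (verit) mult_nonneg_nonneg zero_le_power2)
    then show ?thesis using RA_ne[of y1 y2] by linarith
  qed
  have T_ne: "\<forall>a b. norm (T a - T b) \<le> norm (a - b)"
  proof (intro allI)
    fix a b
    have "(norm (T a - T b))\<^sup>2 \<le> (norm (a - b))\<^sup>2" using T_ne2[of a b] bb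
      by (smt (verit) mult_nonneg_nonneg zero_le_power2)
    then show "norm (T a - T b) \<le> norm (a - b)" by (rule power2_le_imp_le) simp
  qed
  obtain p0 v where pv: "q = p0 + v" "v \<in> op_scale cc (op_add A B) p0"
    using qran unfolding ran_id_plus_def cc_def by blast
  obtain w where w: "w \<in> op_add A B p0" "v = cc *\<^sub>R w" using pv(2) unfolding op_scale_def by blast
  obtain a b where ab: "a \<in> A p0" "b \<in> B p0" "w = a + b" using w(1) unfolding op_add_def by blast
  have ccp: "cc > 0" using g b1 by (simp add: cc_def)
  have P_eq: "P = p0"
    unfolding P_def by (rule resolvent_eq) (use monoA monoB ccp pv in \<open>auto intro!: mono_scale mono_add\<close>)
  define xs0 where "xs0 = p0 - q + \<gamma> *\<^sub>R a"
  have JA_xs0: "JA xs0 = p0 - q"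
    unfolding JA_def
  proof (rule resolvent_eq[OF mMA])
    have "\<gamma> *\<^sub>R a \<in> (\<lambda>v. \<gamma> *\<^sub>R v) ` A p0" using ab(1) by (rule imageI)
    then show "xs0 - (p0 - q) \<in> MA (p0 - q)"
      by (simp add: xs0_def MA_def op_scale_def op_perturb_def)
  qed
  have cc2: "(2 - 2 * \<beta>) * cc = \<gamma>" using b1 by (simp add: cc_def field_simps)
  have qp: "q - p0 = cc *\<^sub>R (a + b)" using pv(1) w(2) ab(3) by simp
  have RA_xs0: "RA xs0 - (p0 - q) = \<gamma> *\<^sub>R b"
  proof -
    have e: "RA xs0 = (2 * \<beta>) *\<^sub>R (p0 - q) - xs0" by (simp add: RA_def JA_xs0)
    have "RA xs0 - (p0 - q) = (2 - 2 * \<beta>) *\<^sub>R (q - p0) - \<gamma> *\<^sub>R a"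
      unfolding e unfolding xs0_def by (simp add: algebra_simps scaleR_2)
    also have "\<dots> = ((2 - 2 * \<beta>) * cc) *\<^sub>R (a + b) - \<gamma> *\<^sub>R a" by (simp only: qp scaleR_scaleR)
    also have "\<dots> = \<gamma> *\<^sub>R b" unfolding cc2 by (simp add: algebra_simps)
    finally show ?thesis .
  qed
  have JB_xs0: "JB (RA xs0) = p0 - q"
    unfolding JB_def
  proof (rule resolvent_eq[OF mMB])
    have "\<gamma> *\<^sub>R b \<in> (\<lambda>v. \<gamma> *\<^sub>R v) ` B p0" using ab(2) by (rule imageI)
    then show "RA xs0 - (p0 - q) \<in> MB (p0 - q)"
      by (simp add: RA_xs0 MB_def op_scale_def op_perturb_def)
  qed
  have eRA: "RA xs0 = (2 * \<beta>) *\<^sub>R (p0 - q) - xs0" by (simp add: RA_def JA_xs0)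
  have T_xs0: "T xs0 = xs0"
    unfolding T_def RB_def JB_xs0 unfolding eRA by simp
  have fixJA: "JA f = p0 - q" if "T f = f" for f
  proof -
    have "(norm (f - xs0))\<^sup>2 \<le> (norm (f - xs0))\<^sup>2 - 4 * \<beta> * (1 - \<beta>) * (norm (JA f - JA xs0))\<^sup>2"
      using T_ne2[of f xs0] that T_xs0 by simp
    then have "4 * \<beta> * (1 - \<beta>) * (norm (JA f - JA xs0))\<^sup>2 \<le> 0" by simp
    then have "(norm (JA f - JA xs0))\<^sup>2 \<le> 0" using bb
      by (metis mult_le_0_iff not_le)
    then show ?thesis using JA_xs0 by simp
  qed
  have JgA: "resolvent (op_scale \<gamma> A) (q + y) = JA y + q" for y
  proof (rule resolvent_eq)
    show "mono_op (op_scale \<gamma> A)" using monoA g by (intro mono_scale) auto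
    have "y - JA y \<in> MA (JA y)" by (rule JA_spec)
    then show "q + y - (JA y + q) \<in> op_scale \<gamma> A (JA y + q)"
      by (simp add: MA_def op_scale_def op_perturb_def)
  qed
  have rec: "\<forall>n. x (Suc n) = (1 - lam n) *\<^sub>R x n + lam n *\<^sub>R T (x n)"
    using recx by (simp add: T_def RA_def RB_def JA_def JB_def MA_def MB_def)
  interpret K: km T lam x using T_ne lam rec by unfold_locales auto
  have asy: "(\<lambda>n. x n - T (x n)) \<longlonglongrightarrow> 0" by (rule K.asy[OF T_xs0 ns])
  have Dn: "(\<lambda>n. norm (x n - T (x n))) \<longlonglongrightarrow> 0" using asy by (simp add: tendsto_norm_zero_iff)
  have part1: "(\<lambda>n. x (Suc n) - x n) \<longlonglongrightarrow> 0"
  proof (rule Lim_null_comparison[OF _ Dn])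
    show "\<forall>\<^sub>F n in sequentially. norm (x (Suc n) - x n) \<le> norm (x n - T (x n))"
    proof (rule always_eventually, intro allI)
      fix n
      have "x (Suc n) - x n = lam n *\<^sub>R (T (x n) - x n)" using rec by (simp add: algebra_simps)
      then have "norm (x (Suc n) - x n) = lam n * norm (T (x n) - x n)" using lam by simp
      also have "\<dots> \<le> norm (T (x n) - x n)" using lam by (simp add: mult_left_le_one_le)
      finally show "norm (x (Suc n) - x n) \<le> norm (x n - T (x n))" by (simp add: norm_minus_commute)
    qed
  qed
  have Bx: "\<forall>n. norm (x n) \<le> norm (x 0 - xs0) + norm xs0"
  proof
    fix n
    have "norm (x n) \<le> norm (x n - xs0) + norm xs0" by (metis norm_triangle_sub add.commute)
    then show "norm (x n) \<le> norm (x 0 - xs0) + norm xs0" using K.bound[OF T_xs0, of n] by linarith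
  qed
  obtain c where c: "T c = c" "weak_conv x c"
    using weak_conv_thm[OF T_ne Bx K.conv asy] by blast
  have c2: "resolvent (op_scale \<gamma> A) (q + c) = P" using JgA fixJA[OF c(1)] P_eq by simp
  define R0 where "R0 = norm (x 0 - xs0)"
  define gg where "gg n = sqrt ((2 * R0 * norm (x n - T (x n))) / (4 * \<beta> * (1 - \<beta>)))" for n
  have gg0: "gg \<longlonglongrightarrow> 0"
  proof -
    have "(\<lambda>n. sqrt ((2 * R0 * norm (x n - T (x n))) / (4 * \<beta> * (1 - \<beta>)))) \<longlonglongrightarrow> sqrt ((2 * R0 * 0) / (4 * \<beta> * (1 - \<beta>)))"
      by (intro tendsto_intros Dn) (use b0 b1 in simp)
    then show ?thesis by (simp add: gg_def[abs_def])
  qed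
  have "(\<lambda>n. JA (x n) - (p0 - q)) \<longlonglongrightarrow> 0"
  proof (rule Lim_null_comparison[OF _ gg0], rule always_eventually, intro allI)
    fix n
    define aa where "aa = norm (x n - xs0)"
    define bq where "bq = norm (T (x n) - xs0)"
    have h1: "4 * \<beta> * (1 - \<beta>) * (norm (JA (x n) - (p0 - q)))\<^sup>2 \<le> aa\<^sup>2 - bq\<^sup>2"
      using T_ne2[of "x n" xs0] T_xs0 JA_xs0 unfolding aa_def bq_def by simp
    have ba: "bq \<le> aa" unfolding aa_def bq_def using T_ne T_xs0 by metis
    have ab: "aa - bq \<le> norm (x n - T (x n))" unfolding aa_def bq_def
      using norm_triangle_ineq[of "x n - T (x n)" "T (x n) - xs0"] by simp
    have aR: "aa \<le> R0" unfolding aa_def R0_def by (rule K.bound[OF T_xs0])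
    have bq0: "0 \<le> bq" by (simp add: bq_def)
    have "aa\<^sup>2 - bq\<^sup>2 = (aa - bq) * (aa + bq)" by (simp add: power2_eq_square algebra_simps)
    also have "\<dots> \<le> norm (x n - T (x n)) * (2 * R0)"
      using ab aR ba bq0 by (intro mult_mono) auto
    finally have "4 * \<beta> * (1 - \<beta>) * (norm (JA (x n) - (p0 - q)))\<^sup>2 \<le> 2 * R0 * norm (x n - T (x n))"
      using h1 by (simp add: algebra_simps)
    then have "(norm (JA (x n) - (p0 - q)))\<^sup>2 \<le> (2 * R0 * norm (x n - T (x n))) / (4 * \<beta> * (1 - \<beta>))"
      using bb by (simp add: field_simps)
    then show "norm (JA (x n) - (p0 - q)) \<le> gg n" unfolding gg_def by (rule real_le_rsqrt)
  qed
  then have "(\<lambda>n. JA (x n)) \<longlonglongrightarrow> p0 - q" by (simp add: LIM_zero_iff)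
  then have "(\<lambda>n. JA (x n) + q) \<longlonglongrightarrow> p0 - q + q" by (intro tendsto_intros)
  then have part3: "(\<lambda>n. resolvent (op_scale \<gamma> A) (q + x n)) \<longlonglongrightarrow> P" using JgA P_eq by simp
  have main: "\<exists>xs. xs = T xs \<and> (\<lambda>n. x (Suc n) - x n) \<longlonglongrightarrow> 0 \<and> weak_conv x xs
     \<and> resolvent (op_scale \<gamma> A) (q + xs) = P \<and> (\<lambda>n. resolvent (op_scale \<gamma> A) (q + x n)) \<longlonglongrightarrow> P"
    using c c2 part1 part3 by metis
  then show ?thesis by (simp add: T_def RA_def RB_def JA_def JB_def MA_def MB_def P_def cc_def)
qed

end
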